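(* Let $M$ be a combinational Boolean circuit with set of internal variables $X$, set of input variables $V$ and set of output variables $W$, and let $F(X,V,W)$ be a CNF formula specifying $M$. Let $B(W)$ be a clause over variables of $W$, let $C \in F$ be a clause, and let $H(V)$ be a CNF formula over variables of $V$ such that $$\exists X\,\exists W\,[F \wedge B] \;\equiv\; H \wedge \exists X\,\exists W\,[(F \setminus \{C\}) \wedge B].$$ Let $Q(V)$ be a clause of $H$. Then for every full assignment $\mathbf{v}$ to $V$ that falsifies $Q$, the output assignment $\mathbf{w}$ produced by $M$ on input $\mathbf{v}$ falsifies the clause $B$.
   Context: A CNF formula is identified with the set of its clauses, so $F\setminus\{C\}$ is $F$ with clause $C$ removed. $F$ specifies $M$ means $F = F_{G_1}\wedge\dots\wedge F_{G_k}$, where $G_1,\dots,G_k$ are the gates of $M$ and $F_{G_i}$ is the standard (Tseitin) CNF encoding of gate $G_i$, so that the assignments to $X\cup V\cup W$ satisfying $F$ are exactly the consistent assignments to all gates of $M$, i.e., exactly the execution traces $(\mathbf{x},\mathbf{v},\mathbf{w})$ of $M$ (for each input $\mathbf{v}$ there is exactly one such trace). Two formulas possibly containing existential quantifiers are equivalent ($\equiv$) if they evaluate to the same value under every full assignment to their free variables. *)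

theory Defs
  imports Main
begin

type_synonym 'a lit = "'a \<times> bool"        (* (x, True) = x, (x, False) = \<not>x *)
type_synonym 'a clause = "'a lit set"
type_synonym 'a cnf = "'a clause set"
type_synonym 'a assignment = "'a \<Rightarrow> bool"

definition sat_lit :: "'a assignment \<Rightarrow> 'a lit \<Rightarrow> bool" where
  "sat_lit \<sigma> l \<longleftrightarrow> \<sigma> (fst l) = snd l"

definition sat_clause :: "'a assignment \<Rightarrow> 'a clause \<Rightarrow> bool" where
  "sat_clause \<sigma> C \<longleftrightarrow> (\<exists>l\<in>C. sat_lit \<sigma> l)"

definition sat_cnf :: "'a assignment \<Rightarrow> 'a cnf \<Rightarrow> bool" where
  "sat_cnf \<sigma> F \<longleftrightarrow> (\<forall>C\<in>F. sat_clause \<sigma> C)"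

definition vars_clause :: "'a clause \<Rightarrow> 'a set" where
  "vars_clause C = fst ` C"

definition vars_cnf :: "'a cnf \<Rightarrow> 'a set" where
  "vars_cnf F = (\<Union>C\<in>F. vars_clause C)"

definition agree_outside :: "'a set \<Rightarrow> 'a assignment \<Rightarrow> 'a assignment \<Rightarrow> bool" where
  "agree_outside Z \<sigma> \<tau> \<longleftrightarrow> (\<forall>x. x \<notin> Z \<longrightarrow> \<sigma> x = \<tau> x)"

(* Gates and combinational circuits.
   A gate is (output variable, list of input variables, Boolean function).
   A circuit is a list of gates in topological order. *)
type_synonym 'a gate = "'a \<times> 'a list \<times> (bool list \<Rightarrow> bool)"
type_synonym 'a circuit = "'a gate list"

definition gate_out :: "'a gate \<Rightarrow> 'a" where "gate_out g = fst g"
definition gate_ins :: "'a gate \<Rightarrow> 'a list" where "gate_ins g = fst (snd g)"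
definition gate_fun :: "'a gate \<Rightarrow> bool list \<Rightarrow> bool" where "gate_fun g = snd (snd g)"

definition gate_consistent :: "'a assignment \<Rightarrow> 'a gate \<Rightarrow> bool" where
  "gate_consistent \<sigma> g \<longleftrightarrow> \<sigma> (gate_out g) = gate_fun g (map \<sigma> (gate_ins g))"

fun topo_ok :: "'a set \<Rightarrow> 'a circuit \<Rightarrow> bool" where
  "topo_ok D [] = True"
| "topo_ok D (g # gs) \<longleftrightarrow> set (gate_ins g) \<subseteq> D \<and> gate_out g \<notin> D
      \<and> topo_ok (insert (gate_out g) D) gs"

definition circuit :: "'a circuit \<Rightarrow> 'a set \<Rightarrow> 'a set \<Rightarrow> 'a set \<Rightarrow> bool" where
  "circuit M X V W \<longleftrightarrow> topo_ok V M \<and> X \<inter> W = {}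
      \<and> set (map gate_out M) = X \<union> W"

fun run :: "'a circuit \<Rightarrow> 'a assignment \<Rightarrow> 'a assignment" where
  "run [] \<sigma> = \<sigma>"
| "run (g # gs) \<sigma> = run gs (\<sigma>(gate_out g := gate_fun g (map \<sigma> (gate_ins g))))"

definition encodes_gate :: "'a cnf \<Rightarrow> 'a gate \<Rightarrow> bool" where
  "encodes_gate E g \<longleftrightarrow> finite E \<and> (\<forall>C\<in>E. finite C)
     \<and> vars_cnf E \<subseteq> insert (gate_out g) (set (gate_ins g))
     \<and> (\<forall>\<sigma>. sat_cnf \<sigma> E \<longleftrightarrow> gate_consistent \<sigma> g)"

definition specifies :: "'a cnf \<Rightarrow> 'a circuit \<Rightarrow> bool" where
  "specifies F M \<longleftrightarrow> (\<exists>E. (\<forall>g\<in>set M. encodes_gate (E g) g) \<and> F = (\<Union>g\<in>set M. E g))"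

end

theory Submission
  imports Defs
begin

lemma topo_notin: "topo_ok D gs \<Longrightarrow> x \<in> D \<Longrightarrow> x \<notin> set (map gate_out gs)"
  by (induction gs arbitrary: D) auto

lemma run_outside: "x \<notin> set (map gate_out M) \<Longrightarrow> run M \<sigma> x = \<sigma> x"
  by (induction M arbitrary: \<sigma>) auto

lemma run_consistent: "topo_ok D M \<Longrightarrow> g \<in> set M \<Longrightarrow> gate_consistent (run M \<sigma>) g"
proof (induction M arbitrary: D \<sigma>)
  case Nil then show ?case by simp
next
  case (Cons h gs)
  define \<sigma>' where "\<sigma>' = \<sigma>(gate_out h := gate_fun h (map \<sigma> (gate_ins h)))"
  have r: "run (h # gs) \<sigma> = run gs \<sigma>'" by (simp add: \<sigma>'_def)
  show ?case
  proof (cases "g = h")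
    case True
    have t: "topo_ok (insert (gate_out h) D) gs" "set (gate_ins h) \<subseteq> D" "gate_out h \<notin> D"
      using Cons.prems by auto
    have eq: "\<And>x. x \<in> insert (gate_out h) D \<Longrightarrow> run gs \<sigma>' x = \<sigma>' x"
      using topo_notin[OF t(1)] run_outside by metis
    have "map (run gs \<sigma>') (gate_ins h) = map \<sigma>' (gate_ins h)"
      using eq t(2) by (auto intro!: map_cong)
    also have "\<dots> = map \<sigma> (gate_ins h)"
      using t(2,3) by (auto simp: \<sigma>'_def intro!: map_cong)
    finally have m: "map (run gs \<sigma>') (gate_ins h) = map \<sigma> (gate_ins h)" .
    have "run gs \<sigma>' (gate_out h) = gate_fun h (map \<sigma> (gate_ins h))"
      using eq[of "gate_out h"] by (simp add: \<sigma>'_def)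
    then show ?thesis using True r m unfolding gate_consistent_def by metis
  next
    case False
    then show ?thesis using Cons r by auto
  qed
qed

theorem proposition3:
  fixes M :: "'a circuit" and X V W :: "'a set"
    and F H :: "'a cnf" and B C Q :: "'a clause"
  assumes "circuit M X V W"
    and "specifies F M"
    and "vars_clause B \<subseteq> W"
    and "C \<in> F"
    and "finite H" and "\<forall>D\<in>H. finite D" and "vars_cnf H \<subseteq> V"
    and "\<forall>\<sigma>. (\<exists>\<tau>. agree_outside (X \<union> W) \<sigma> \<tau> \<and> sat_cnf \<tau> F \<and> sat_clause \<tau> B)
             \<longleftrightarrow> (sat_cnf \<sigma> H \<and>
                  (\<exists>\<tau>. agree_outside (X \<union> W) \<sigma> \<tau> \<and> sat_cnf \<tau> (F - {C}) \<and> sat_clause \<tau> B))"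
    and "Q \<in> H"
  shows "\<forall>v. \<not> sat_clause v Q \<longrightarrow> \<not> sat_clause (run M v) B"
proof (intro allI impI notI)
  fix v assume nq: "\<not> sat_clause v Q" and sb: "sat_clause (run M v) B"
  have topo: "topo_ok V M" and outs: "set (map gate_out M) = X \<union> W"
    using assms(1) by (auto simp: circuit_def)
  have ag: "agree_outside (X \<union> W) v (run M v)"
    unfolding agree_outside_def using outs run_outside by metis
  obtain E where E: "\<forall>g\<in>set M. encodes_gate (E g) g" "F = (\<Union>g\<in>set M. E g)"
    using assms(2) by (auto simp: specifies_def)
  have "sat_cnf (run M v) F"
    unfolding sat_cnf_def
  proof
    fix D assume "D \<in> F"
    then obtain g where g: "g \<in> set M" "D \<in> E g" using E(2) by auto
    have "sat_cnf (run M v) (E g)"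
      using E(1) g(1) run_consistent[OF topo g(1)] by (auto simp: encodes_gate_def)
    then show "sat_clause (run M v) D" using g(2) by (auto simp: sat_cnf_def)
  qed
  then have "sat_cnf v H" using assms(8) ag sb by blast
  then show False using nq assms(9) by (auto simp: sat_cnf_def)
qed

end
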